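(* Fix $w,z\in S_n$ and let $\mathcal{L}=\{x\in C_z^\vee:\kappa(x)\ge\kappa(w)\}$. Suppose $\mathcal{L}$ has a maximum element $y_M$ and a minimum element $y_m$ in the inversion table order, and let $J=\{1\le j\le n:\iota_j(y_M)=\iota_j(y_m)+1\}$. If $x\in S_n$ satisfies $\iota(x)=\iota(y_M)-e_j$ for some $j\in J$ (where $e_j$ is the $j$th standard basis vector), then $x\in\mathcal{L}$.
   Context: Permutations are in one-line notation. For $x\in S_n$: inversion table $\iota_k(x)=\#\{i<x^{-1}(k):x(i)>k\}$; code $\kappa_k(x)=\#\{i<x(k):x^{-1}(i)>k\}$. A permutation is determined by its inversion table. Vectors are compared componentwise; the inversion table order on $S_n$ is $x\le y$ iff $\iota(x)\le\iota(y)$. For $z\in S_n$, $C_z^\vee$ is the Boolean sublattice of the inversion table order generated by the elements covered by $z$, namely the set of $x\in S_n$ with $\iota_k(z)-1\le\iota_k(x)\le\iota_k(z)$ for all $k$. *)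

theory Defs
  imports "HOL-Combinatorics.Permutations"
begin

text \<open>Permutations of S_n are functions nat => nat permuting {1..n} (identity elsewhere),
in one-line notation x(1),...,x(n). The inverse is inv x.\<close>

definition inv_table :: "nat \<Rightarrow> (nat \<Rightarrow> nat) \<Rightarrow> nat \<Rightarrow> nat" where
  "inv_table n x k = card {i \<in> {1..n}. i < inv x k \<and> x i > k}"

definition code_vec :: "nat \<Rightarrow> (nat \<Rightarrow> nat) \<Rightarrow> nat \<Rightarrow> nat" where
  "code_vec n x k = card {i \<in> {1..n}. i < x k \<and> inv x i > k}"

definition it_le :: "nat \<Rightarrow> (nat \<Rightarrow> nat) \<Rightarrow> (nat \<Rightarrow> nat) \<Rightarrow> bool" where
  "it_le n x y \<longleftrightarrow> (\<forall>k\<in>{1..n}. inv_table n x k \<le> inv_table n y k)"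

definition Cvee :: "nat \<Rightarrow> (nat \<Rightarrow> nat) \<Rightarrow> (nat \<Rightarrow> nat) set" where
  "Cvee n z = {x. x permutes {1..n} \<and>
     (\<forall>k\<in>{1..n}. int (inv_table n z k) - 1 \<le> int (inv_table n x k)
                 \<and> inv_table n x k \<le> inv_table n z k)}"

end

theory Submission imports Defs begin

lemma card_pos:
  assumes "bij_betw P A A"
  shows "card {w\<in>A. R (P w)} = card {p\<in>A. R p}"
proof -
  have img: "P ` {w\<in>A. R (P w)} = {p\<in>A. R p}"
  proof
    show "P ` {w \<in> A. R (P w)} \<subseteq> {p \<in> A. R p}" using assms by (auto simp: bij_betw_def)
    show "{p \<in> A. R p} \<subseteq> P ` {w \<in> A. R (P w)}"
    proof
      fix p assume "p \<in> {p \<in> A. R p}"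
      then have "p \<in> P ` A" using assms by (simp add: bij_betw_def)
      then obtain w where "w \<in> A" "P w = p" by blast
      then show "p \<in> P ` {w \<in> A. R (P w)}" using \<open>p \<in> {p \<in> A. R p}\<close> by auto
    qed
  qed
  have inj: "inj_on P {w\<in>A. R (P w)}" using assms by (auto simp: bij_betw_def intro: inj_on_subset)
  have "card (P ` {w\<in>A. R (P w)}) = card {w\<in>A. R (P w)}" by (rule card_image[OF inj])
  then show ?thesis using img by simp
qed

lemma card_lt:
  assumes "bij_betw F {1..n} {1..n}" "v \<in> {1..n}"
  shows "card {w\<in>{1..n}. F w < F v} = F v - 1"
proof -
  have "card {w\<in>{1..n}. F w < F v} = card {p\<in>{1..n}. p < F v}"
    by (rule card_pos[OF assms(1), of "\<lambda>p. p < F v"])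
  moreover have "F v \<in> {1..n}" using assms bij_betwE by blast
  then have "{p\<in>{1..n}. p < F v} = {1..<F v}" by auto
  ultimately show ?thesis by simp
qed

lemma card_open:
  assumes "bij_betw F {1..n} {1..n}"
  shows "card {w\<in>{1..n}. a < F w \<and> F w < b} \<le> b - Suc a"
proof -
  have "card {w\<in>{1..n}. a < F w \<and> F w < b} = card {p\<in>{1..n}. a < p \<and> p < b}"
    by (rule card_pos[OF assms(1), of "\<lambda>p. a < p \<and> p < b"])
  moreover have "card {p\<in>{1..n}. a < p \<and> p < b} \<le> card {a<..<b}"
    by (intro card_mono) auto
  ultimately show ?thesis by simp
qed

lemma card_half:
  assumes "bij_betw F {1..n} {1..n}" "b \<le> n"
  shows "card {w\<in>{1..n}. a < F w \<and> F w \<le> b} = b - a"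
proof -
  have "card {w\<in>{1..n}. a < F w \<and> F w \<le> b} = card {p\<in>{1..n}. a < p \<and> p \<le> b}"
    by (rule card_pos[OF assms(1), of "\<lambda>p. a < p \<and> p \<le> b"])
  moreover have "{p\<in>{1..n}. a < p \<and> p \<le> b} = {a<..b}" using assms(2) by auto
  ultimately show ?thesis by simp
qed

locale boxpair =
  fixes n :: nat and P Q :: "nat \<Rightarrow> nat" and j :: nat
  assumes bP: "bij_betw P {1..n} {1..n}" and bQ: "bij_betw Q {1..n} {1..n}"
  and box1: "\<And>v. v \<in> {1..n} \<Longrightarrow> card {w\<in>{1..n}. v<w \<and> Q w < Q v} \<le> card {w\<in>{1..n}. v<w \<and> P w < P v}"
  and box2: "\<And>v. v \<in> {1..n} \<Longrightarrow> card {w\<in>{1..n}. v<w \<and> P w < P v} \<le> card {w\<in>{1..n}. v<w \<and> Q w < Q v} + 1"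
  and jS: "j \<in> {1..n}"
  and jeq: "card {w\<in>{1..n}. j<w \<and> Q w < Q j} = card {w\<in>{1..n}. j<w \<and> P w < P j}"
begin

abbreviation "S \<equiv> {1..n}"
definition "BX = {i\<in>S. i<j \<and> P i < P j}"
definition "BY = {i\<in>S. i<j \<and> Q i < Q j}"
definition "AX = {i\<in>S. i<j \<and> P j < P i}"
definition "AY = {i\<in>S. i<j \<and> Q j < Q i}"
definition "GX = {w\<in>S. j<w \<and> P w < P j}"
definition "GY = {w\<in>S. j<w \<and> Q w < Q j}"
definition "D = BY - BX"

lemma PS: "v \<in> S \<Longrightarrow> P v \<in> S" using bP bij_betwE by blast
lemma QS: "v \<in> S \<Longrightarrow> Q v \<in> S" using bQ bij_betwE by blast
lemma Pinj: "v \<in> S \<Longrightarrow> u \<in> S \<Longrightarrow> P u = P v \<Longrightarrow> u = v"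
  using bP by (metis bij_betw_imp_inj_on inj_onD)
lemma Qinj: "v \<in> S \<Longrightarrow> u \<in> S \<Longrightarrow> Q u = Q v \<Longrightarrow> u = v"
  using bQ by (metis bij_betw_imp_inj_on inj_onD)

lemma fins: "finite BX" "finite BY" "finite AX" "finite AY" "finite GX" "finite GY" "finite D"
  by (auto simp: BX_def BY_def AX_def AY_def GX_def GY_def D_def)

lemma cardG: "card GY = card GX" using jeq by (simp add: GX_def GY_def)

lemma K1: "i \<in> BX \<Longrightarrow> i \<in> BY"
proof (induction "j - i" arbitrary: i rule: less_induct)
  case less
  have iS: "i\<in>S" "i<j" "P i < P j" using less.prems BX_def by auto
  show ?case
  proof (rule ccontr)
    assume nb: "i \<notin> BY"
    have "Q i \<noteq> Q j" using Qinj[of j i] iS jS by auto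
    then have qji: "Q j < Q i" using nb iS by (auto simp: BY_def)
    have IH: "u \<in> BY" if "u \<in> BX" "i < u" for u
      using less.hyps[of u] that by (auto simp: BX_def)
    have sub1: "insert j (GY \<union> {u\<in>BX. i<u}) \<subseteq> {w\<in>S. i<w \<and> Q w < Q i}"
    proof
      fix u assume u: "u \<in> insert j (GY \<union> {u\<in>BX. i<u})"
      show "u \<in> {w\<in>S. i<w \<and> Q w < Q i}"
      proof (cases "u \<in> {u\<in>BX. i<u}")
        case True
        then have "Q u < Q j" using IH[of u] by (auto simp: BY_def)
        then show ?thesis using True qji by (auto simp: BX_def)
      next
        case False
        then show ?thesis using u jS iS qji by (auto simp: GY_def)
      qed
    qed
    have c1: "card (insert j (GY \<union> {u\<in>BX. i<u})) = 1 + card GY + card {u\<in>BX. i<u}"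
    proof -
      have "GY \<inter> {u\<in>BX. i<u} = {}" by (auto simp: GY_def BX_def)
      then have "card (GY \<union> {u\<in>BX. i<u}) = card GY + card {u\<in>BX. i<u}"
        using fins by (simp add: card_Un_disjoint)
      moreover have "j \<notin> GY \<union> {u\<in>BX. i<u}" by (auto simp: GY_def BX_def)
      ultimately show ?thesis using fins by simp
    qed
    have sub2: "{w\<in>S. i<w \<and> P w < P i} \<subseteq> GX \<union> {u\<in>BX. i<u}"
    proof
      fix w assume w: "w \<in> {w\<in>S. i<w \<and> P w < P i}"
      then have pw: "P w < P j" using iS by auto
      then have "w \<noteq> j" by auto
      then show "w \<in> GX \<union> {u\<in>BX. i<u}" using w pw by (auto simp: GX_def BX_def)
    qed
    have "1 + card GY + card {u\<in>BX. i<u} = card (insert j (GY \<union> {u\<in>BX. i<u}))" using c1 by simp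
    also have "\<dots> \<le> card {w\<in>S. i<w \<and> Q w < Q i}"
      by (rule card_mono[OF _ sub1]) simp
    also have "\<dots> \<le> card {w\<in>S. i<w \<and> P w < P i}" by (rule box1[OF iS(1)])
    also have "\<dots> \<le> card (GX \<union> {u\<in>BX. i<u})"
      using fins by (intro card_mono[OF _ sub2]) auto
    also have "\<dots> \<le> card GX + card {u\<in>BX. i<u}" by (rule card_Un_le)
    finally show False using cardG by simp
  qed
qed


lemma BXsub: "BX \<subseteq> BY" using K1 by blast

lemma cGXB: "card (insert j (GX \<union> {u\<in>BX. t<u})) = 1 + card GX + card {u\<in>BX. t<u}"
proof -
  have "GX \<inter> {u\<in>BX. t<u} = {}" by (auto simp: GX_def BX_def)
  then have "card (GX \<union> {u\<in>BX. t<u}) = card GX + card {u\<in>BX. t<u}"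
    using fins by (simp add: card_Un_disjoint)
  moreover have "j \<notin> GX \<union> {u\<in>BX. t<u}" by (auto simp: GX_def BX_def)
  ultimately show ?thesis using fins by simp
qed

lemma cGYB: "card (GY \<union> {u\<in>BY. t<u}) = card GY + card {u\<in>BY. t<u}"
proof -
  have "GY \<inter> {u\<in>BY. t<u} = {}" by (auto simp: GY_def BY_def)
  then show ?thesis using fins by (simp add: card_Un_disjoint)
qed

lemma cBYD: "card {u\<in>BY. t<u} = card {u\<in>BX. t<u} + card {u\<in>D. t<u}"
proof -
  have "{u\<in>BY. t<u} = {u\<in>BX. t<u} \<union> {u\<in>D. t<u}" using BXsub by (auto simp: D_def)
  moreover have "{u\<in>BX. t<u} \<inter> {u\<in>D. t<u} = {}" by (auto simp: D_def)
  ultimately show ?thesis using fins by (simp add: card_Un_disjoint)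
qed

lemma Dprops: "u \<in> D \<Longrightarrow> u \<in> S \<and> u < j \<and> Q u < Q j \<and> P j < P u"
proof -
  assume u: "u \<in> D"
  then have a: "u \<in> S" "u < j" "Q u < Q j" "\<not> P u < P j" by (auto simp: D_def BY_def BX_def)
  have "P u \<noteq> P j" using Pinj[of j u] a jS by auto
  then show ?thesis using a by auto
qed

lemma invY:
  assumes "t \<le> j" and w: "w \<in> S" "j < w" "Q w < Q j"
  shows "card {u\<in>D. t \<le> u} \<le> card {u\<in>S. t\<le>u \<and> u<j \<and> Q w < Q u \<and> Q u < Q j}"
  using assms(1)
proof (induction "j - t" arbitrary: t rule: less_induct)
  case less
  show ?case
  proof (cases "t < j")
    case False
    then have "{u\<in>D. t \<le> u} = {}" using Dprops by fastforce
    then have "card {u\<in>D. t \<le> u} = 0" by (simp only: card.empty)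
    then show ?thesis by linarith
  next
    case True
    define T where "T = {u\<in>S. Suc t\<le>u \<and> u<j \<and> Q w < Q u \<and> Q u < Q j}"
    have finT: "finite T" by (simp add: T_def)
    have IH: "card {u\<in>D. Suc t \<le> u} \<le> card T"
      using less.hyps[of "Suc t"] True by (simp add: T_def)
    show ?thesis
    proof (cases "t \<in> D")
      case False
      have "{u\<in>D. t \<le> u} = {u\<in>D. Suc t \<le> u}" using False by (auto simp: Suc_le_eq order.order_iff_strict)
      moreover have "card T \<le> card {u\<in>S. t\<le>u \<and> u<j \<and> Q w < Q u \<and> Q u < Q j}"
        by (intro card_mono) (auto simp: T_def)
      ultimately show ?thesis using IH by simp
    next
      case True
      then have tD: "t\<in>S" "t<j" "Q t < Q j" "P j < P t" using Dprops by auto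
      have "Q w < Q t"
      proof (rule ccontr)
        assume "\<not> Q w < Q t"
        moreover have "Q w \<noteq> Q t" using Qinj[of t w] tD w by auto
        ultimately have qtw: "Q t < Q w" by simp
        have sub: "{u\<in>S. t<u \<and> Q u < Q t} \<union> insert w T \<subseteq> GY \<union> {u\<in>BY. t<u}"
        proof
          fix u assume u: "u \<in> {u\<in>S. t<u \<and> Q u < Q t} \<union> insert w T"
          then have "u \<in> S" "t < u" "Q u < Q j" using tD w qtw by (auto simp: T_def)
          moreover then have "u \<noteq> j" by auto
          ultimately show "u \<in> GY \<union> {u\<in>BY. t<u}" by (auto simp: GY_def BY_def)
        qed
        have disj: "{u\<in>S. t<u \<and> Q u < Q t} \<inter> insert w T = {}" using qtw by (auto simp: T_def)
        have "w \<notin> T" using w by (auto simp: T_def)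
        then have cl: "card ({u\<in>S. t<u \<and> Q u < Q t} \<union> insert w T) = card {u\<in>S. t<u \<and> Q u < Q t} + 1 + card T"
          using disj finT by (simp add: card_Un_disjoint)
        have "card ({u\<in>S. t<u \<and> Q u < Q t} \<union> insert w T) \<le> card (GY \<union> {u\<in>BY. t<u})"
          using fins by (intro card_mono[OF _ sub]) auto
        then have "card {u\<in>S. t<u \<and> Q u < Q t} + 1 + card T \<le> card GY + card {u\<in>BX. t<u} + card {u\<in>D. t<u}"
          using cl cGYB cBYD by simp
        moreover have "{u\<in>D. t<u} = {u\<in>D. Suc t \<le> u}" by auto
        ultimately have A: "card {u\<in>S. t<u \<and> Q u < Q t} + 1 \<le> card GX + card {u\<in>BX. t<u}"
          using IH cardG by simp
        have sub2: "insert j (GX \<union> {u\<in>BX. t<u}) \<subseteq> {u\<in>S. t<u \<and> P u < P t}"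
          using tD jS by (auto simp: GX_def BX_def)
        have "card (insert j (GX \<union> {u\<in>BX. t<u})) \<le> card {u\<in>S. t<u \<and> P u < P t}"
          by (intro card_mono[OF _ sub2]) auto
        then have "1 + card GX + card {u\<in>BX. t<u} \<le> card {u\<in>S. t<u \<and> P u < P t}" using cGXB by simp
        with box2[OF tD(1)] A show False by simp
      qed
      then have e1: "{u\<in>S. t\<le>u \<and> u<j \<and> Q w < Q u \<and> Q u < Q j} = insert t T"
        using tD by (auto simp: T_def)
      have e2: "{u\<in>D. t \<le> u} = insert t {u\<in>D. Suc t \<le> u}" using True by auto
      have "t \<notin> T" by (simp add: T_def)
      then show ?thesis using IH e1 e2 finT fins by simp
    qed
  qed
qed

lemma invX:
  assumes "t \<le> j" and w: "w \<in> S" "j < w" "P j < P w"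
  shows "card {u\<in>D. t \<le> u} \<le> card {u\<in>S. t\<le>u \<and> u<j \<and> P j < P u \<and> P u < P w}"
  using assms(1)
proof (induction "j - t" arbitrary: t rule: less_induct)
  case less
  show ?case
  proof (cases "t < j")
    case False
    then have "{u\<in>D. t \<le> u} = {}" using Dprops by fastforce
    then have "card {u\<in>D. t \<le> u} = 0" by (simp only: card.empty)
    then show ?thesis by linarith
  next
    case True
    define T where "T = {u\<in>S. Suc t\<le>u \<and> u<j \<and> P j < P u \<and> P u < P w}"
    have finT: "finite T" by (simp add: T_def)
    have IH: "card {u\<in>D. Suc t \<le> u} \<le> card T"
      using less.hyps[of "Suc t"] True by (simp add: T_def)
    show ?thesis
    proof (cases "t \<in> D")
      case False
      have "{u\<in>D. t \<le> u} = {u\<in>D. Suc t \<le> u}" using False by (auto simp: Suc_le_eq order.order_iff_strict)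
      moreover have "card T \<le> card {u\<in>S. t\<le>u \<and> u<j \<and> P j < P u \<and> P u < P w}"
        by (intro card_mono) (auto simp: T_def)
      ultimately show ?thesis using IH by simp
    next
      case True
      then have tD: "t\<in>S" "t<j" "Q t < Q j" "P j < P t" using Dprops by auto
      have "P t < P w"
      proof (rule ccontr)
        assume "\<not> P t < P w"
        moreover have "P w \<noteq> P t" using Pinj[of t w] tD w by auto
        ultimately have ptw: "P w < P t" by simp
        have sub: "insert j (GX \<union> {u\<in>BX. t<u}) \<union> insert w T \<subseteq> {u\<in>S. t<u \<and> P u < P t}"
        proof
          fix u assume u: "u \<in> insert j (GX \<union> {u\<in>BX. t<u}) \<union> insert w T"
          show "u \<in> {u\<in>S. t<u \<and> P u < P t}"
            using u tD w ptw jS by (auto simp: T_def GX_def BX_def)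
        qed
        have disj: "insert j (GX \<union> {u\<in>BX. t<u}) \<inter> insert w T = {}"
          using w by (auto simp: T_def GX_def BX_def)
        have "w \<notin> T" using w by (auto simp: T_def)
        then have cw: "card (insert w T) = 1 + card T" using finT by simp
        have "card (insert j (GX \<union> {u\<in>BX. t<u}) \<union> insert w T) = card (insert j (GX \<union> {u\<in>BX. t<u})) + card (insert w T)"
          by (rule card_Un_disjoint) (use disj finT fins in auto)
        then have cl: "card (insert j (GX \<union> {u\<in>BX. t<u}) \<union> insert w T) = 1 + card GX + card {u\<in>BX. t<u} + 1 + card T"
          using cw cGXB by simp
        have "card (insert j (GX \<union> {u\<in>BX. t<u}) \<union> insert w T) \<le> card {u\<in>S. t<u \<and> P u < P t}"
          by (intro card_mono[OF _ sub]) auto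
        moreover have "{u\<in>D. t<u} = {u\<in>D. Suc t \<le> u}" by auto
        ultimately have A: "2 + card GX + card {u\<in>BX. t<u} + card {u\<in>D. t<u} \<le> card {u\<in>S. t<u \<and> P u < P t}"
          using cl IH by simp
        have sub2: "{u\<in>S. t<u \<and> Q u < Q t} \<subseteq> GY \<union> {u\<in>BY. t<u}"
        proof
          fix u assume u: "u \<in> {u\<in>S. t<u \<and> Q u < Q t}"
          then have "u \<in> S" "t < u" "Q u < Q j" using tD by auto
          moreover then have "u \<noteq> j" by auto
          ultimately show "u \<in> GY \<union> {u\<in>BY. t<u}" by (auto simp: GY_def BY_def)
        qed
        have "card {u\<in>S. t<u \<and> Q u < Q t} \<le> card (GY \<union> {u\<in>BY. t<u})"
          using fins by (intro card_mono[OF _ sub2]) auto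
        then have "card {u\<in>S. t<u \<and> Q u < Q t} \<le> card GX + card {u\<in>BX. t<u} + card {u\<in>D. t<u}"
          using cGYB cBYD cardG by simp
        with box2[OF tD(1)] A show False by simp
      qed
      then have e1: "{u\<in>S. t\<le>u \<and> u<j \<and> P j < P u \<and> P u < P w} = insert t T"
        using tD by (auto simp: T_def)
      have e2: "{u\<in>D. t \<le> u} = insert t {u\<in>D. Suc t \<le> u}" using True by auto
      have "t \<notin> T" by (simp add: T_def)
      then show ?thesis using IH e1 e2 finT fins by simp
    qed
  qed
qed


lemma posP: "P j = 1 + card GX + card BX"
proof -
  have e: "{w\<in>S. P w < P j} = GX \<union> BX"
  proof
    show "{w\<in>S. P w < P j} \<subseteq> GX \<union> BX"
    proof
      fix w assume w: "w \<in> {w\<in>S. P w < P j}"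
      then have "w \<noteq> j" by auto
      then show "w \<in> GX \<union> BX" using w by (auto simp: GX_def BX_def)
    qed
    show "GX \<union> BX \<subseteq> {w\<in>S. P w < P j}" by (auto simp: GX_def BX_def)
  qed
  have "GX \<inter> BX = {}" by (auto simp: GX_def BX_def)
  then have "card (GX \<union> BX) = card GX + card BX" using fins by (simp add: card_Un_disjoint)
  moreover have "card {w\<in>S. P w < P j} = P j - 1" by (rule card_lt[OF bP jS])
  moreover have "P j \<ge> 1" using PS[OF jS] by auto
  ultimately show ?thesis using e by simp
qed

lemma posQ: "Q j = 1 + card GY + card BY"
proof -
  have e: "{w\<in>S. Q w < Q j} = GY \<union> BY"
  proof
    show "{w\<in>S. Q w < Q j} \<subseteq> GY \<union> BY"
    proof
      fix w assume w: "w \<in> {w\<in>S. Q w < Q j}"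
      then have "w \<noteq> j" by auto
      then show "w \<in> GY \<union> BY" using w by (auto simp: GY_def BY_def)
    qed
    show "GY \<union> BY \<subseteq> {w\<in>S. Q w < Q j}" by (auto simp: GY_def BY_def)
  qed
  have "GY \<inter> BY = {}" by (auto simp: GY_def BY_def)
  then have "card (GY \<union> BY) = card GY + card BY" using fins by (simp add: card_Un_disjoint)
  moreover have "card {w\<in>S. Q w < Q j} = Q j - 1" by (rule card_lt[OF bQ jS])
  moreover have "Q j \<ge> 1" using QS[OF jS] by auto
  ultimately show ?thesis using e by simp
qed

lemma cardD: "card D = card BY - card BX" "card BX \<le> card BY"
  unfolding D_def by (rule card_Diff_subset[OF fins(1) BXsub], rule card_mono[OF fins(2) BXsub])

lemma QPD: "Q j = P j + card D"
proof -
  note a = posP posQ cardD cardG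
  show ?thesis using a by arith
qed

lemma ABX: "card AX + card BX = j - 1"
proof -
  have e: "{i\<in>S. i<j} = AX \<union> BX"
  proof
    show "{i\<in>S. i<j} \<subseteq> AX \<union> BX"
    proof
      fix i assume i: "i \<in> {i\<in>S. i<j}"
      then have "P i \<noteq> P j" using Pinj[of j i] jS by auto
      then show "i \<in> AX \<union> BX" using i by (auto simp: AX_def BX_def)
    qed
    show "AX \<union> BX \<subseteq> {i\<in>S. i<j}" by (auto simp: AX_def BX_def)
  qed
  have "AX \<inter> BX = {}" by (auto simp: AX_def BX_def)
  then have c1: "card (AX \<union> BX) = card AX + card BX" using fins by (simp add: card_Un_disjoint)
  have a: "{i\<in>S. i<j} = {1..<j}" using jS by auto
  have "AX \<union> BX = {1..<j}" by (rule trans[OF e[symmetric] a])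
  then have "card (AX \<union> BX) = j - 1" by simp
  then show ?thesis using c1 by simp
qed

lemma ABY: "card AY + card BY = j - 1"
proof -
  have e: "{i\<in>S. i<j} = AY \<union> BY"
  proof
    show "{i\<in>S. i<j} \<subseteq> AY \<union> BY"
    proof
      fix i assume i: "i \<in> {i\<in>S. i<j}"
      then have "Q i \<noteq> Q j" using Qinj[of j i] jS by auto
      then show "i \<in> AY \<union> BY" using i by (auto simp: AY_def BY_def)
    qed
    show "AY \<union> BY \<subseteq> {i\<in>S. i<j}" by (auto simp: AY_def BY_def)
  qed
  have "AY \<inter> BY = {}" by (auto simp: AY_def BY_def)
  then have c1: "card (AY \<union> BY) = card AY + card BY" using fins by (simp add: card_Un_disjoint)
  have a: "{i\<in>S. i<j} = {1..<j}" using jS by auto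
  have "AY \<union> BY = {1..<j}" by (rule trans[OF e[symmetric] a])
  then have "card (AY \<union> BY) = j - 1" by simp
  then show ?thesis using c1 by simp
qed

lemma DS: "{u\<in>D. 1 \<le> u} = D" using Dprops by auto

lemma lemA:
  assumes v: "v \<in> S" "Q v = P j"
  shows "card {i\<in>S. i<v \<and> Q v < Q i} \<le> card {i\<in>S. i<j \<and> P j < P i}"
proof -
  have vj: "v \<le> j"
  proof (rule ccontr)
    assume "\<not> v \<le> j"
    then have jv: "j < v" by simp
    have "Q v \<noteq> Q j" using Qinj[of j v] jv v jS by auto
    then have qv: "Q v < Q j" using QPD v by simp
    have "card {u\<in>D. 1 \<le> u} \<le> card {u\<in>S. 1\<le>u \<and> u<j \<and> Q v < Q u \<and> Q u < Q j}"
      by (rule invY) (use jS v jv qv in auto)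
    also have "\<dots> \<le> card {u\<in>S. Q v < Q u \<and> Q u < Q j}" by (intro card_mono) auto
    also have "\<dots> \<le> Q j - Suc (Q v)" by (rule card_open[OF bQ])
    finally have "card D \<le> Q j - Suc (Q v)" using DS by simp
    then show False using QPD v qv by simp
  qed
  have sub: "{i\<in>S. i<v \<and> Q v < Q i} \<subseteq> AY \<union> {u\<in>S. P j < Q u \<and> Q u < Q j}"
  proof
    fix i assume i: "i \<in> {i\<in>S. i<v \<and> Q v < Q i}"
    then have "Q i \<noteq> Q j" using Qinj[of j i] vj jS by auto
    then show "i \<in> AY \<union> {u\<in>S. P j < Q u \<and> Q u < Q j}" using i vj v by (auto simp: AY_def)
  qed
  have "card {i\<in>S. i<v \<and> Q v < Q i} \<le> card (AY \<union> {u\<in>S. P j < Q u \<and> Q u < Q j})"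
    using fins by (intro card_mono[OF _ sub]) auto
  also have "\<dots> \<le> card AY + card {u\<in>S. P j < Q u \<and> Q u < Q j}" by (rule card_Un_le)
  also have "card {u\<in>S. P j < Q u \<and> Q u < Q j} \<le> Q j - Suc (P j)" by (rule card_open[OF bQ])
  finally have "card {i\<in>S. i<v \<and> Q v < Q i} \<le> card AY + card D" using QPD by simp
  moreover have "card AY + card D = card AX" using ABX ABY cardD by arith
  ultimately show ?thesis by (simp add: AX_def)
qed

lemma lemA':
  assumes v: "v \<in> S" "P v = Q j"
  shows "card {i\<in>S. i<v \<and> P v < P i} \<le> card {i\<in>S. i<j \<and> Q j < Q i}"
proof -
  define M where "M = {u\<in>S. P j < P u \<and> P u \<le> Q j}"
  have Mc: "card M = card D" unfolding M_def
    using card_half[OF bP, of "Q j" "P j"] QS[OF jS] QPD by simp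
  have Msub: "M \<subseteq> AX"
  proof
    fix u assume u: "u \<in> M"
    then have uS: "u \<in> S" "P j < P u" "P u \<le> Q j" by (auto simp: M_def)
    have "\<not> j < u"
    proof
      assume ju: "j < u"
      have "card {u'\<in>D. 1 \<le> u'} \<le> card {u'\<in>S. 1\<le>u' \<and> u'<j \<and> P j < P u' \<and> P u' < P u}"
        by (rule invX) (use jS uS ju in auto)
      also have "\<dots> \<le> card {u'\<in>S. P j < P u' \<and> P u' < P u}" by (intro card_mono) auto
      also have "\<dots> \<le> P u - Suc (P j)" by (rule card_open[OF bP])
      finally have "card D \<le> P u - Suc (P j)" using DS by simp
      then show False using QPD uS by simp
    qed
    moreover have "u \<noteq> j" using uS by auto
    ultimately show "u \<in> AX" using uS by (auto simp: AX_def)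
  qed
  have vj: "v \<le> j"
  proof (cases "v = j")
    case False
    then have "P v \<noteq> P j" using Pinj[of j v] v jS by auto
    then have "v \<in> M" using v QPD by (auto simp: M_def)
    then show ?thesis using Msub by (auto simp: AX_def)
  qed simp
  have sub: "{i\<in>S. i<v \<and> P v < P i} \<subseteq> AX - M"
    using vj v QPD by (auto simp: AX_def M_def)
  have "card {i\<in>S. i<v \<and> P v < P i} \<le> card (AX - M)"
    using fins by (intro card_mono[OF _ sub]) auto
  also have "\<dots> = card AX - card M" using Msub fins by (simp add: card_Diff_subset finite_subset)
  finally have "card {i\<in>S. i<v \<and> P v < P i} \<le> card AX - card D" using Mc by simp
  moreover have "card AX - card D = card AY" using ABX ABY cardD by arith
  ultimately show ?thesis by (simp add: AY_def)
qed

end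

lemma bij_inv: "y permutes {1..n} \<Longrightarrow> bij_betw (inv y) {1..n} {1..n}"
  by (simp add: permutes_imp_bij permutes_inv)

lemma it_eq:
  assumes "y permutes {1..n}"
  shows "inv_table n y k = card {w\<in>{1..n}. k<w \<and> inv y w < inv y k}"
proof -
  have b: "bij_betw y {1..n} {1..n}" by (rule permutes_imp_bij[OF assms])
  have "card {w\<in>{1..n}. k < y w \<and> inv y (y w) < inv y k} = card {p\<in>{1..n}. k < p \<and> inv y p < inv y k}"
    by (rule card_pos[OF b, of "\<lambda>p. k < p \<and> inv y p < inv y k"])
  moreover have "{w\<in>{1..n}. k < y w \<and> inv y (y w) < inv y k} = {i\<in>{1..n}. i < inv y k \<and> y i > k}"
    using permutes_inverses(2)[OF assms] by auto
  ultimately show ?thesis by (simp add: inv_table_def)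
qed

lemma cv_eq: "y permutes {1..n} \<Longrightarrow> code_vec n y (inv y v) = card {i\<in>{1..n}. i<v \<and> inv y v < inv y i}"
  by (simp add: code_vec_def permutes_inverses(1))

theorem lemma5p3:
  fixes n :: nat and w z yM ym x :: "nat \<Rightarrow> nat" and j :: nat
    and L :: "(nat \<Rightarrow> nat) set"
  assumes w: "w permutes {1..n}" and z: "z permutes {1..n}"
    and L_def: "L = {y \<in> Cvee n z. \<forall>k\<in>{1..n}. code_vec n y k \<ge> code_vec n w k}"
    and yM: "yM \<in> L" "\<forall>y\<in>L. it_le n y yM"
    and ym: "ym \<in> L" "\<forall>y\<in>L. it_le n ym y"
    and x: "x permutes {1..n}"
    and j: "j \<in> {j \<in> {1..n}. inv_table n yM j = inv_table n ym j + 1}"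
    and xt: "\<forall>k\<in>{1..n}. int (inv_table n x k) = int (inv_table n yM k) - (if k = j then 1 else 0)"
  shows "x \<in> L"
proof -
  have yMC: "yM \<in> Cvee n z" and cM: "\<And>k. k\<in>{1..n} \<Longrightarrow> code_vec n w k \<le> code_vec n yM k"
    using yM(1) L_def by auto
  have ymC: "ym \<in> Cvee n z" and cm: "\<And>k. k\<in>{1..n} \<Longrightarrow> code_vec n w k \<le> code_vec n ym k"
    using ym(1) L_def by auto
  have pM: "yM permutes {1..n}"
    and bM: "\<And>k. k\<in>{1..n} \<Longrightarrow> int (inv_table n z k) - 1 \<le> int (inv_table n yM k) \<and> inv_table n yM k \<le> inv_table n z k"
    using yMC by (auto simp: Cvee_def)
  have pm: "ym permutes {1..n}"
    and bm: "\<And>k. k\<in>{1..n} \<Longrightarrow> int (inv_table n z k) - 1 \<le> int (inv_table n ym k) \<and> inv_table n ym k \<le> inv_table n z k"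
    using ymC by (auto simp: Cvee_def)
  have le: "\<And>k. k\<in>{1..n} \<Longrightarrow> inv_table n ym k \<le> inv_table n yM k"
    using ym(2) yM(1) by (auto simp: it_le_def)
  have jS: "j \<in> {1..n}" and jj: "inv_table n yM j = inv_table n ym j + 1" using j by auto
  have xa: "inv_table n x k = inv_table n yM k" if k: "k\<in>{1..n}" "k \<noteq> j" for k
  proof -
    have "int (inv_table n x k) = int (inv_table n yM k)" using xt[rule_format, OF k(1)] k(2) by simp
    then show ?thesis by simp
  qed
  have xj: "inv_table n x j = inv_table n ym j"
  proof -
    have "int (inv_table n x j) = int (inv_table n yM j) - 1" using xt[rule_format, OF jS] by simp
    then show ?thesis using jj by simp
  qed
  have xle: "\<And>k. k\<in>{1..n} \<Longrightarrow> inv_table n x k \<le> inv_table n yM k"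
    using xa xj jj by (metis le_add1 order_refl)
  have xge: "\<And>k. k\<in>{1..n} \<Longrightarrow> inv_table n ym k \<le> inv_table n x k"
    using xa xj le by (metis order_refl)
  have xup: "\<And>k. k\<in>{1..n} \<Longrightarrow> inv_table n yM k \<le> inv_table n x k + 1"
    using xa xj jj by (metis le_add1 order_refl)
  have mup: "\<And>k. k\<in>{1..n} \<Longrightarrow> inv_table n x k \<le> inv_table n ym k + 1"
  proof -
    fix k assume k: "k\<in>{1..n}"
    have "inv_table n x k \<le> inv_table n z k" using xle[OF k] bM[OF k] by simp
    moreover have "int (inv_table n z k) \<le> int (inv_table n ym k) + 1" using bm[OF k] by simp
    ultimately show "inv_table n x k \<le> inv_table n ym k + 1" by simp
  qed
  have xC: "x \<in> Cvee n z"
    unfolding Cvee_def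
  proof (intro CollectI conjI ballI x)
    fix k assume k: "k\<in>{1..n}"
    show "inv_table n x k \<le> inv_table n z k" using xle[OF k] bM[OF k] by simp
    show "int (inv_table n z k) - 1 \<le> int (inv_table n x k)"
    proof (cases "k = j")
      case True
      then show ?thesis using bm[OF k] xj by simp
    next
      case False
      then show ?thesis using bM[OF k] xa[OF k] by simp
    qed
  qed
  have itx: "\<And>v. card {w\<in>{1..n}. v<w \<and> inv x w < inv x v} = inv_table n x v" using it_eq[OF x] by simp
  have itM: "\<And>v. card {w\<in>{1..n}. v<w \<and> inv yM w < inv yM v} = inv_table n yM v" using it_eq[OF pM] by simp
  have itm: "\<And>v. card {w\<in>{1..n}. v<w \<and> inv ym w < inv ym v} = inv_table n ym v" using it_eq[OF pm] by simp
  have code: "code_vec n w k \<le> code_vec n x k" if k: "k \<in> {1..n}" for k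
  proof -
    define u where "u = x k"
    have uS: "u \<in> {1..n}" unfolding u_def using permutes_in_image[OF x] k by blast
    have ku: "inv x u = k" using permutes_inverses(2)[OF x] by (simp add: u_def)
    show ?thesis
    proof (cases "u = j")
      case True
      have bp: "boxpair n (inv x) (inv ym) j"
        by (unfold_locales) (use bij_inv[OF x] bij_inv[OF pm] itx itm xge mup jS xj in auto)
      have vS: "ym k \<in> {1..n}" using permutes_in_image[OF pm] k by blast
      have vk: "inv ym (ym k) = inv x j" using permutes_inverses(2)[OF pm] ku True by simp
      have "card {i\<in>{1..n}. i < ym k \<and> inv ym (ym k) < inv ym i} \<le> card {i\<in>{1..n}. i<j \<and> inv x j < inv x i}"
        by (rule boxpair.lemA[OF bp vS vk])
      moreover have "card {i\<in>{1..n}. i < ym k \<and> inv ym (ym k) < inv ym i} = code_vec n ym k"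
        using cv_eq[OF pm, of "ym k"] permutes_inverses(2)[OF pm] by simp
      moreover have "card {i\<in>{1..n}. i<j \<and> inv x j < inv x i} = code_vec n x k"
        using cv_eq[OF x, of j] ku True by simp
      ultimately show ?thesis using cm[OF k] by simp
    next
      case False
      have bp: "boxpair n (inv yM) (inv x) u"
        by (unfold_locales) (use bij_inv[OF x] bij_inv[OF pM] itx itM xle xup uS xa False in auto)
      have vS: "yM k \<in> {1..n}" using permutes_in_image[OF pM] k by blast
      have vk: "inv yM (yM k) = inv x u" using permutes_inverses(2)[OF pM] ku by simp
      have "card {i\<in>{1..n}. i < yM k \<and> inv yM (yM k) < inv yM i} \<le> card {i\<in>{1..n}. i<u \<and> inv x u < inv x i}"
        by (rule boxpair.lemA'[OF bp vS vk])
      moreover have "card {i\<in>{1..n}. i < yM k \<and> inv yM (yM k) < inv yM i} = code_vec n yM k"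
        using cv_eq[OF pM, of "yM k"] permutes_inverses(2)[OF pM] by simp
      moreover have "card {i\<in>{1..n}. i<u \<and> inv x u < inv x i} = code_vec n x k"
        using cv_eq[OF x, of u] ku by simp
      ultimately show ?thesis using cM[OF k] by simp
    qed
  qed
  show ?thesis using xC code L_def by auto
qed

end
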